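(* Let $G$ be a graph with at least one isolated vertex such that $G\ne\widetilde G$, and let $T$ be a minimum twin cover of $G$. Then for every $t\ge1$, \[(t+1)|T|+t-1\le \det(\mu_t(G))\le \det(\widetilde G)+(t+1)|T|+t-1.\] Moreover, both bounds are sharp: each is attained (with equality) by some graph $G$ satisfying the hypotheses.
   Context: All graphs are finite and simple. For a graph $G$ with $V(G)=\{v_1,\dots,v_n\}$ and an integer $t\ge1$, the generalized Mycielskian $\mu_t(G)$ has vertex set $\{u_i^s: 1\le i\le n,\ 0\le s\le t\}\cup\{w\}$, where $u_i^0$ is identified with $v_i$. Its edges are: $u_i^0u_j^0$ for each edge $v_iv_j$ of $G$; $u_i^su_j^{s+1}$ and $u_j^su_i^{s+1}$ for each edge $v_iv_j$ of $G$ and each $0\le s<t$; and $u_i^tw$ for all $1\le i\le n$. A set $S\subseteq V(G)$ is a determining set for $G$ if the only automorphism of $G$ fixing every vertex of $S$ is the identity; $\det(G)$ is the minimum size of a determining set. Two vertices are twins if they have the same open neighborhood; being twins is an equivalence relation on $V(G)$, and the twin quotient $\widetilde G$ has the equivalence classes as vertices, with two classes adjacent iff some members are adjacent in $G$ ($G\ne\widetilde G$ means $G$ has a pair of distinct twins). A minimum twin cover is a minimum-size vertex subset containing at least one vertex from every pair of distinct twins. *)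

theory Defs
  imports Main
begin

definition sgraph :: "'a set \<Rightarrow> 'a set set \<Rightarrow> bool" where
  "sgraph V E \<longleftrightarrow> finite V \<and> (\<forall>e\<in>E. e \<subseteq> V \<and> card e = 2)"

definition nbhd :: "'a set \<Rightarrow> 'a set set \<Rightarrow> 'a \<Rightarrow> 'a set" where
  "nbhd V E v = {u\<in>V. {u, v} \<in> E}"

definition isolated :: "'a set \<Rightarrow> 'a set set \<Rightarrow> 'a \<Rightarrow> bool" where
  "isolated V E v \<longleftrightarrow> v \<in> V \<and> nbhd V E v = {}"

definition automorphism :: "'a set \<Rightarrow> 'a set set \<Rightarrow> ('a \<Rightarrow> 'a) \<Rightarrow> bool" where
  "automorphism V E f \<longleftrightarrow> bij_betw f V V \<and>
     (\<forall>x\<in>V. \<forall>y\<in>V. {x, y} \<in> E \<longleftrightarrow> {f x, f y} \<in> E)"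

definition determining_set :: "'a set \<Rightarrow> 'a set set \<Rightarrow> 'a set \<Rightarrow> bool" where
  "determining_set V E S \<longleftrightarrow> S \<subseteq> V \<and>
     (\<forall>f. automorphism V E f \<longrightarrow> (\<forall>x\<in>S. f x = x) \<longrightarrow> (\<forall>x\<in>V. f x = x))"

definition det_num :: "'a set \<Rightarrow> 'a set set \<Rightarrow> nat" where
  "det_num V E = Min (card ` {S. determining_set V E S})"

definition twins :: "'a set \<Rightarrow> 'a set set \<Rightarrow> 'a \<Rightarrow> 'a \<Rightarrow> bool" where
  "twins V E u v \<longleftrightarrow> u \<in> V \<and> v \<in> V \<and> nbhd V E u = nbhd V E v"

text \<open>G differs from its twin quotient: G has a pair of distinct twins.\<close>
definition has_distinct_twins :: "'a set \<Rightarrow> 'a set set \<Rightarrow> bool" where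
  "has_distinct_twins V E \<longleftrightarrow> (\<exists>u v. u \<noteq> v \<and> twins V E u v)"

definition twin_cover :: "'a set \<Rightarrow> 'a set set \<Rightarrow> 'a set \<Rightarrow> bool" where
  "twin_cover V E T \<longleftrightarrow> T \<subseteq> V \<and>
     (\<forall>u v. u \<noteq> v \<and> twins V E u v \<longrightarrow> u \<in> T \<or> v \<in> T)"

definition min_twin_cover :: "'a set \<Rightarrow> 'a set set \<Rightarrow> 'a set \<Rightarrow> bool" where
  "min_twin_cover V E T \<longleftrightarrow> twin_cover V E T \<and>
     (\<forall>T'. twin_cover V E T' \<longrightarrow> card T \<le> card T')"

definition twin_class :: "'a set \<Rightarrow> 'a set set \<Rightarrow> 'a \<Rightarrow> 'a set" where
  "twin_class V E v = {u\<in>V. twins V E u v}"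

definition quotV :: "'a set \<Rightarrow> 'a set set \<Rightarrow> 'a set set" where
  "quotV V E = twin_class V E ` V"

definition quotE :: "'a set \<Rightarrow> 'a set set \<Rightarrow> 'a set set set" where
  "quotE V E = {{A, B} | A B. A \<in> quotV V E \<and> B \<in> quotV V E \<and>
                   (\<exists>a\<in>A. \<exists>b\<in>B. {a, b} \<in> E)}"

text \<open>Generalized Mycielskian mu_t(G): vertex u_i^s is Some (v_i, s), the root w is None.\<close>
definition mycV :: "nat \<Rightarrow> 'a set \<Rightarrow> ('a \<times> nat) option set" where
  "mycV t V = {Some (v, s) | v s. v \<in> V \<and> s \<le> t} \<union> {None}"

definition mycE :: "nat \<Rightarrow> 'a set \<Rightarrow> 'a set set \<Rightarrow> ('a \<times> nat) option set set" where
  "mycE t V E =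
     {{Some (u, 0), Some (v, 0)} | u v. {u, v} \<in> E}
   \<union> {{Some (u, s), Some (v, Suc s)} | u v s. {u, v} \<in> E \<and> s < t}
   \<union> {{Some (v, t), None} | v. v \<in> V}"

end

theory Submission
  imports Defs
begin


fun madj :: "nat \<Rightarrow> 'a set \<Rightarrow> 'a set set \<Rightarrow> ('a\<times>nat) option \<Rightarrow> ('a\<times>nat) option \<Rightarrow> bool" where
  "madj t V E None None = False"
| "madj t V E None (Some (v,r)) = (r = t \<and> v \<in> V)"
| "madj t V E (Some (u,s)) None = (s = t \<and> u \<in> V)"
| "madj t V E (Some (u,s)) (Some (v,r)) = ({u,v}\<in>E \<and> ((s=0 \<and> r=0) \<or> (r = Suc s \<and> s < t) \<or> (s = Suc r \<and> r < t)))"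

lemma mycE_iff: "{x,y} \<in> mycE t V E \<longleftrightarrow> madj t V E x y"
proof
  assume "{x,y} \<in> mycE t V E"
  then show "madj t V E x y"
    unfolding mycE_def
    apply (elim UnE CollectE exE conjE)
      apply (auto simp: doubleton_eq_iff insert_commute)
    done
next
  assume h: "madj t V E x y"
  show "{x,y} \<in> mycE t V E"
  proof (cases x)
    case None
    then obtain v r where y: "y = Some (v,r)" using h by (cases y) auto
    then show ?thesis using h None unfolding mycE_def by (auto simp: insert_commute)
  next
    case (Some p)
    then obtain u s where x: "x = Some (u,s)" by (cases p) auto
    show ?thesis
    proof (cases y)
      case None
      then show ?thesis using h x unfolding mycE_def by auto
    next
      case (Some q)
      then obtain v r where y: "y = Some (v,r)" by (cases q) auto
      have e: "{u,v}\<in>E" using h x y by simp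
      have "(s=0 \<and> r=0) \<or> (r = Suc s \<and> s < t) \<or> (s = Suc r \<and> r < t)" using h x y by simp
      then show ?thesis
      proof (elim disjE conjE)
        assume "s=0" "r=0" then show ?thesis using e x y unfolding mycE_def by blast
      next
        assume "r = Suc s" "s < t" then show ?thesis using e x y unfolding mycE_def by blast
      next
        assume a: "s = Suc r" "r < t"
        have "{v,u} \<in> E" using e by (simp add: insert_commute)
        then have "{Some (v,r), Some (u, Suc r)} \<in> mycE t V E" using a unfolding mycE_def by blast
        then show ?thesis using x y a by (simp add: insert_commute)
      qed
    qed
  qed
qed

lemma madj_sym: "madj t V E x y = madj t V E y x"
  by (metis insert_commute mycE_iff)



lemma aut_nbhd:
  assumes "automorphism V E f" "x \<in> V"
  shows "nbhd V E (f x) = f ` nbhd V E x"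
proof -
  have b: "bij_betw f V V" and e: "\<forall>x\<in>V. \<forall>y\<in>V. {x, y} \<in> E \<longleftrightarrow> {f x, f y} \<in> E"
    using assms(1) unfolding automorphism_def by auto
  have fx: "f x \<in> V" using b assms(2) bij_betwE by blast
  show ?thesis
  proof
    show "nbhd V E (f x) \<subseteq> f ` nbhd V E x"
    proof
      fix y assume "y \<in> nbhd V E (f x)"
      then have y: "y \<in> V" "{y, f x} \<in> E" unfolding nbhd_def by auto
      then obtain y' where y': "y' \<in> V" "y = f y'" using b by (metis bij_betw_imp_surj_on imageE)
      then have "{y', x} \<in> E" using e y assms(2) by blast
      then show "y \<in> f ` nbhd V E x" using y' unfolding nbhd_def by auto
    qed
  next
    show "f ` nbhd V E x \<subseteq> nbhd V E (f x)"
      using e assms(2) b unfolding nbhd_def by (auto dest: bij_betwE)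
  qed
qed

lemma sgraph_no_loop: "sgraph V E \<Longrightarrow> {x} \<notin> E"
  unfolding sgraph_def by fastforce

lemma sgraph_edge: "sgraph V E \<Longrightarrow> {x,y} \<in> E \<Longrightarrow> x \<in> V \<and> y \<in> V \<and> x \<noteq> y"
proof -
  assume "sgraph V E" "{x,y} \<in> E"
  then have "{x,y} \<subseteq> V" "card {x,y} = 2" unfolding sgraph_def by auto
  then show ?thesis by (cases "x = y") auto
qed

lemma swap_aut:
  assumes sg: "sgraph V E" and tw: "twins V E u v"
  shows "automorphism V E (\<lambda>x. if x = u then v else if x = v then u else x)" (is "automorphism V E ?s")
proof -
  have uv: "u \<in> V" "v \<in> V" and nb: "nbhd V E u = nbhd V E v" using tw unfolding twins_def by auto
  have nbe: "\<And>y. y \<in> V \<Longrightarrow> {y,u} \<in> E \<longleftrightarrow> {y,v} \<in> E" using nb unfolding nbhd_def by blast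
  have "bij_betw ?s V V"
    by (rule bij_betw_byWitness[where f'="?s"]) (use uv in auto)
  moreover have "{x, y} \<in> E \<longleftrightarrow> {?s x, ?s y} \<in> E" if "x \<in> V" "y \<in> V" for x y
  proof -
    have a1: "{x,u} \<in> E \<longleftrightarrow> {x,v} \<in> E" "{u,x} \<in> E \<longleftrightarrow> {v,x} \<in> E"
      using nbe[OF that(1)] by (auto simp: insert_commute)
    have a2: "{y,u} \<in> E \<longleftrightarrow> {y,v} \<in> E" "{u,y} \<in> E \<longleftrightarrow> {v,y} \<in> E"
      using nbe[OF that(2)] by (auto simp: insert_commute)
    have l: "{u} \<notin> E" "{v} \<notin> E" using sgraph_no_loop[OF sg] by auto
    have c: "{u,v} = {v,u}" by (rule insert_commute)
    consider "x \<in> {u,v}" "y \<in> {u,v}" | "x \<in> {u,v}" "y \<notin> {u,v}" | "x \<notin> {u,v}" "y \<in> {u,v}"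
      | "x \<notin> {u,v}" "y \<notin> {u,v}" by blast
    then show ?thesis
    proof cases
      case 1
      then show ?thesis
      proof (cases "x = y")
        case True then show ?thesis using l 1 by auto
      next
        case False
        then have "{x,y} = {u,v}" "{?s x, ?s y} = {u,v}" using 1 by auto
        then show ?thesis by simp
      qed
    next
      case 2
      then have "?s y = y" by auto
      moreover have "{x,y} \<in> E \<longleftrightarrow> {u,y} \<in> E" "{?s x,y} \<in> E \<longleftrightarrow> {u,y} \<in> E" using 2 a2 by auto
      ultimately show ?thesis by simp
    next
      case 3
      then have "?s x = x" by auto
      moreover have "{x,y} \<in> E \<longleftrightarrow> {x,u} \<in> E" "{x,?s y} \<in> E \<longleftrightarrow> {x,u} \<in> E" using 3 a1 by auto
      ultimately show ?thesis by simp
    next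
      case 4
      then show ?thesis by auto
    qed
  qed
  ultimately show ?thesis unfolding automorphism_def by blast
qed

lemma det_lower:
  assumes sg: "sgraph V E"
    and phi: "\<And>x y. x \<in> V \<Longrightarrow> y \<in> V \<Longrightarrow> \<phi> x = \<phi> y \<Longrightarrow> twins V E x y"
    and S: "determining_set V E S"
  shows "card V \<le> card S + card (\<phi> ` V)"
proof -
  have fin: "finite V" using sg unfolding sgraph_def by auto
  have SV: "S \<subseteq> V" using S unfolding determining_set_def by auto
  have inj: "inj_on \<phi> (V - S)"
  proof (rule inj_onI, rule ccontr)
    fix x y assume x: "x \<in> V - S" and y: "y \<in> V - S" and e: "\<phi> x = \<phi> y" and ne: "x \<noteq> y"
    let ?s = "\<lambda>z. if z = x then y else if z = y then x else z"
    have "automorphism V E ?s" using swap_aut[OF sg phi[OF _ _ e]] x y by auto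
    moreover have "\<forall>z\<in>S. ?s z = z" using x y by auto
    ultimately have "\<forall>z\<in>V. ?s z = z" using S unfolding determining_set_def by blast
    then show False using x ne by auto
  qed
  have "card (V - S) = card (\<phi> ` (V - S))" using card_image[OF inj] by simp
  also have "\<dots> \<le> card (\<phi> ` V)" by (rule card_mono) (use fin in auto)
  finally have "card (V - S) \<le> card (\<phi> ` V)" .
  moreover have "card (V - S) = card V - card S" using card_Diff_subset[OF finite_subset[OF SV fin] SV] .
  moreover have "card S \<le> card V" using card_mono[OF fin SV] .
  ultimately show ?thesis by linarith
qed

lemma det_fin: "finite V \<Longrightarrow> finite {S. determining_set V E S}"
  unfolding determining_set_def by (rule finite_subset[of _ "Pow V"]) auto

lemma det_V: "determining_set V E V"
  unfolding determining_set_def by auto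

lemma det_num_ge:
  assumes "finite V" "\<And>S. determining_set V E S \<Longrightarrow> L \<le> card S"
  shows "L \<le> det_num V E"
  unfolding det_num_def using assms det_fin[OF assms(1)] det_V[of V E]
  by (subst Min_ge_iff) auto

lemma det_num_le:
  assumes "finite V" "determining_set V E S"
  shows "det_num V E \<le> card S"
  unfolding det_num_def using assms det_fin[OF assms(1)]
  by (intro Min_le) auto

lemma det_num_attained:
  assumes "finite V"
  shows "\<exists>D. determining_set V E D \<and> card D = det_num V E"
proof -
  have "det_num V E \<in> card ` {S. determining_set V E S}"
    unfolding det_num_def using det_fin[OF assms] det_V by (intro Min_in) auto
  then show ?thesis by auto
qed



lemma card_inj_bound:
  assumes "finite V" "S \<subseteq> V" "inj_on \<phi> (V - S)"
  shows "card V \<le> card S + card (\<phi> ` V)"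
proof -
  have "card (V - S) = card (\<phi> ` (V - S))" using card_image[OF assms(3)] by simp
  also have "\<dots> \<le> card (\<phi> ` V)" by (rule card_mono) (use assms in auto)
  finally have "card (V - S) \<le> card (\<phi> ` V)" .
  moreover have "card (V - S) = card V - card S" using card_Diff_subset[OF finite_subset[OF assms(2,1)] assms(2)] .
  moreover have "card S \<le> card V" using card_mono[OF assms(1,2)] .
  ultimately show ?thesis by linarith
qed

lemma twin_class_eq:
  assumes "v \<in> V" "w \<in> V"
  shows "twin_class V E v = twin_class V E w \<longleftrightarrow> nbhd V E v = nbhd V E w"
  using assms unfolding twin_class_def twins_def by (auto simp: set_eq_iff)

lemma twin_class_in: "v \<in> V \<Longrightarrow> v \<in> twin_class V E v"
  unfolding twin_class_def twins_def by auto

lemma twin_cover_bound: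
  assumes fin: "finite V" and tc: "twin_cover V E T"
  shows "card V \<le> card T + card (quotV V E)"
proof -
  have TV: "T \<subseteq> V" using tc unfolding twin_cover_def by auto
  have "inj_on (twin_class V E) (V - T)"
  proof (rule inj_onI, rule ccontr)
    fix x y assume x: "x \<in> V - T" and y: "y \<in> V - T" and e: "twin_class V E x = twin_class V E y" and ne: "x \<noteq> y"
    have "twins V E x y" using twin_class_eq[of x V y E] e x y unfolding twins_def by auto
    then show False using tc x y ne unfolding twin_cover_def by blast
  qed
  then show ?thesis using card_inj_bound[OF fin TV] unfolding quotV_def by blast
qed

definition reps :: "'a set \<Rightarrow> 'a set set \<Rightarrow> 'a set" where
  "reps V E = (\<lambda>C. SOME v. v \<in> C) ` quotV V E"

lemma reps_props:
  shows "reps V E \<subseteq> V"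
    and "\<And>r r'. r \<in> reps V E \<Longrightarrow> r' \<in> reps V E \<Longrightarrow> twins V E r r' \<Longrightarrow> r = r'"
    and "\<And>v. v \<in> V \<Longrightarrow> \<exists>r\<in>reps V E. twins V E v r"
proof -
  have sm: "(SOME v. v \<in> twin_class V E x) \<in> twin_class V E x" if "x \<in> V" for x
    using twin_class_in[OF that] by (rule someI)
  show "reps V E \<subseteq> V" unfolding reps_def quotV_def using sm unfolding twin_class_def by auto
  show "\<And>v. v \<in> V \<Longrightarrow> \<exists>r\<in>reps V E. twins V E v r"
  proof -
    fix v assume v: "v \<in> V"
    let ?r = "SOME u. u \<in> twin_class V E v"
    have "?r \<in> reps V E" unfolding reps_def quotV_def using v by auto
    moreover have "twins V E v ?r" using sm[OF v] v unfolding twin_class_def twins_def by auto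
    ultimately show "\<exists>r\<in>reps V E. twins V E v r" by blast
  qed
  show "\<And>r r'. r \<in> reps V E \<Longrightarrow> r' \<in> reps V E \<Longrightarrow> twins V E r r' \<Longrightarrow> r = r'"
  proof -
    fix r r' assume r: "r \<in> reps V E" and r': "r' \<in> reps V E" and tw: "twins V E r r'"
    obtain x where x: "x \<in> V" "r = (SOME v. v \<in> twin_class V E x)" using r unfolding reps_def quotV_def by auto
    obtain y where y: "y \<in> V" "r' = (SOME v. v \<in> twin_class V E y)" using r' unfolding reps_def quotV_def by auto
    have "r \<in> twin_class V E x" "r' \<in> twin_class V E y" using sm x y by auto
    then have "twin_class V E x = twin_class V E y" using tw x y unfolding twin_class_def twins_def
      by (auto simp: set_eq_iff)
    then show "r = r'" using x y by simp
  qed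
qed

lemma card_reps:
  assumes "finite V"
  shows "card (reps V E) = card (quotV V E)"
proof -
  note rp = reps_props[where V=V and E=E]
  have "inj_on (twin_class V E) (reps V E)"
  proof (rule inj_onI)
    fix x y assume x: "x \<in> reps V E" and y: "y \<in> reps V E" and e: "twin_class V E x = twin_class V E y"
    have "x \<in> V" "y \<in> V" using x y rp(1) by auto
    then have "twins V E x y" using twin_class_eq[of x V y E] e unfolding twins_def by auto
    then show "x = y" using rp(2) x y by blast
  qed
  moreover have "twin_class V E ` reps V E = quotV V E"
  proof
    show "twin_class V E ` reps V E \<subseteq> quotV V E" using rp(1) unfolding quotV_def by auto
    show "quotV V E \<subseteq> twin_class V E ` reps V E"
    proof
      fix C assume "C \<in> quotV V E"
      then obtain v where v: "v \<in> V" "C = twin_class V E v" unfolding quotV_def by auto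
      obtain r where r: "r \<in> reps V E" "twins V E v r" using rp(3)[OF v(1)] by blast
      have "twin_class V E r = C" using twin_class_eq[of r V v E] r v rp(1) unfolding twins_def by auto
      then show "C \<in> twin_class V E ` reps V E" using r by blast
    qed
  qed
  ultimately show ?thesis by (metis card_image)
qed

lemma twin_cover_reps: "twin_cover V E (V - reps V E)"
  unfolding twin_cover_def
proof (intro conjI allI impI)
  show "V - reps V E \<subseteq> V" by auto
  fix u v assume h: "u \<noteq> v \<and> twins V E u v"
  then have "u \<in> V" "v \<in> V" by (auto simp: twins_def)
  then show "u \<in> V - reps V E \<or> v \<in> V - reps V E" using reps_props(2)[where V=V and E=E and r=u and r'=v] h by blast
qed

lemma card_min_twin_cover:
  assumes fin: "finite V" and T: "min_twin_cover V E T"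
  shows "card T + card (quotV V E) = card V"
proof -
  have tc: "twin_cover V E T" using T unfolding min_twin_cover_def by auto
  have "card T \<le> card (V - reps V E)" using T twin_cover_reps unfolding min_twin_cover_def by blast
  also have "\<dots> = card V - card (reps V E)" using card_Diff_subset[OF finite_subset[OF reps_props(1)[where V=V and E=E] fin] reps_props(1)] .
  finally have "card T \<le> card V - card (quotV V E)" using card_reps[OF fin] by simp
  moreover have "card V \<le> card T + card (quotV V E)" using twin_cover_bound[OF fin tc] .
  moreover have "card (quotV V E) \<le> card V" unfolding quotV_def using fin card_image_le by blast
  ultimately show ?thesis by linarith
qed



lemma mycV_eq: "mycV t V = insert None (Some ` (V \<times> {..t}))"
  unfolding mycV_def by auto

lemma Some_in_mycV[simp]: "Some (v,s) \<in> mycV t V \<longleftrightarrow> v \<in> V \<and> s \<le> t"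
  unfolding mycV_def by auto

lemma None_in_mycV[simp]: "None \<in> mycV t V"
  unfolding mycV_def by auto

lemma card_mycV:
  assumes "finite V" shows "card (mycV t V) = card V * (t + 1) + 1"
proof -
  have "card (Some ` (V \<times> {..t})) = card V * (t+1)"
    by (subst card_image) (auto simp: card_cartesian_product)
  moreover have "finite (Some ` (V \<times> {..t}))" using assms by auto
  ultimately show ?thesis unfolding mycV_eq by (subst card_insert_disjoint) auto
qed

lemma finite_mycV: "finite V \<Longrightarrow> finite (mycV t V)"
  unfolding mycV_eq by auto

lemma nbhd_myc: "nbhd (mycV t V) (mycE t V E) x = {y \<in> mycV t V. madj t V E y x}"
  unfolding nbhd_def by (simp add: mycE_iff)

lemma mycE_elem: "e \<in> mycE t V E \<Longrightarrow> \<exists>x y. e = {x,y}"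
  unfolding mycE_def by blast


lemma madj_in:
  assumes sg: "sgraph V E" and m: "madj t V E x y"
  shows "x \<in> mycV t V \<and> y \<in> mycV t V \<and> x \<noteq> y"
proof (cases x)
  case None
  then show ?thesis using m by (cases y) auto
next
  case (Some p)
  then obtain u s where x: "x = Some (u,s)" by (cases p) auto
  show ?thesis
  proof (cases y)
    case None then show ?thesis using m x by auto
  next
    case (Some q)
    then obtain v r where y: "y = Some (v,r)" by (cases q) auto
    have "{u,v} \<in> E" using m x y by simp
    then have "u \<in> V" "v \<in> V" "u \<noteq> v" using sgraph_edge[OF sg] by auto
    then show ?thesis using m x y by auto
  qed
qed

lemma sgraph_myc:
  assumes sg: "sgraph V E"
  shows "sgraph (mycV t V) (mycE t V E)"
  unfolding sgraph_def
proof (intro conjI ballI)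
  show "finite (mycV t V)" using sg finite_mycV unfolding sgraph_def by blast
  fix e assume e: "e \<in> mycE t V E"
  then obtain x y where xy: "e = {x,y}" using mycE_elem by blast
  then have "madj t V E x y" using e mycE_iff by blast
  then have "x \<in> mycV t V \<and> y \<in> mycV t V \<and> x \<noteq> y" using madj_in[OF sg] by blast
  then show "e \<subseteq> mycV t V" "card e = 2" using xy by auto
qed

lemma aut_madj:
  assumes "automorphism (mycV t V) (mycE t V E) f" "x \<in> mycV t V" "y \<in> mycV t V"
  shows "madj t V E (f x) (f y) \<longleftrightarrow> madj t V E x y"
  using assms unfolding automorphism_def by (simp add: mycE_iff)


lemma madj_Some_Some_same_nbhd:
  assumes sg: "sgraph V E" and "u \<in> V" "v \<in> V" "nbhd V E u = nbhd V E v"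
  shows "madj t V E z (Some (u,s)) \<longleftrightarrow> madj t V E z (Some (v,s))"
proof -
  have key: "{a,u} \<in> E \<longleftrightarrow> {a,v} \<in> E" for a
  proof (cases "a \<in> V")
    case True then show ?thesis using assms(4) unfolding nbhd_def by blast
  next
    case False then show ?thesis using sgraph_edge[OF sg, of a u] sgraph_edge[OF sg, of a v] by auto
  qed
  show ?thesis
  proof (cases z)
    case None then show ?thesis using assms by auto
  next
    case (Some p) then obtain a r where "z = Some (a,r)" by (cases p) auto
    then show ?thesis using key by simp
  qed
qed


lemma nbhd_iso_low:
  assumes sg: "sgraph V E" and "u \<in> V" "nbhd V E u = {}" "s < t"
  shows "nbhd (mycV t V) (mycE t V E) (Some (u,s)) = {}"
proof -
  have "\<not> madj t V E z (Some (u,s))" for z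
  proof (cases z)
    case None then show ?thesis using assms(4) by simp
  next
    case (Some p) then obtain a r where z: "z = Some (a,r)" by (cases p) auto
    have "{a,u} \<notin> E"
    proof
      assume e: "{a,u} \<in> E"
      then have "a \<in> V" using sgraph_edge[OF sg] by blast
      then have "a \<in> nbhd V E u" using e unfolding nbhd_def by simp
      then show False using assms(3) by simp
    qed
    then show ?thesis using z by simp
  qed
  then show ?thesis unfolding nbhd_myc by simp
qed
lemma nbhd_iso_top:
  assumes sg: "sgraph V E" and "u \<in> V" "nbhd V E u = {}"
  shows "nbhd (mycV t V) (mycE t V E) (Some (u,t)) = {None}"
proof -
  have "madj t V E z (Some (u,t)) \<longleftrightarrow> z = None" for z
  proof (cases z)
    case None then show ?thesis using assms(2) by simp
  next
    case (Some p) then obtain a r where z: "z = Some (a,r)" by (cases p) auto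
    have "{a,u} \<notin> E"
    proof
      assume e: "{a,u} \<in> E"
      then have "a \<in> V" using sgraph_edge[OF sg] by blast
      then have "a \<in> nbhd V E u" using e unfolding nbhd_def by simp
      then show False using assms(3) by simp
    qed
    then show ?thesis using z by simp
  qed
  then show ?thesis unfolding nbhd_myc using None_in_mycV[of t V] by blast
qed


lemma nbhd_None: "nbhd (mycV t V) (mycE t V E) None = Some ` (V \<times> {t})"
  unfolding nbhd_myc
proof (intro set_eqI iffI)
  fix z assume "z \<in> {y \<in> mycV t V. madj t V E y None}"
  then show "z \<in> Some ` (V \<times> {t})" by (cases z) auto
qed auto

lemma nbhd_nonisolated_two:
  assumes sg: "sgraph V E" and "u \<in> V" "nbhd V E u \<noteq> {}" "s \<le> t" "1 \<le> t"
  shows "\<exists>y1 y2. y1 \<noteq> y2 \<and> y1 \<in> nbhd (mycV t V) (mycE t V E) (Some (u,s))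
                         \<and> y2 \<in> nbhd (mycV t V) (mycE t V E) (Some (u,s))"
proof -
  obtain a where a: "a \<in> V" "{a,u} \<in> E" using assms(3) unfolding nbhd_def by auto
  show ?thesis
  proof (cases "s < t")
    case True
    have y1: "Some (a, Suc s) \<in> nbhd (mycV t V) (mycE t V E) (Some (u,s))"
      unfolding nbhd_myc using a True by auto
    show ?thesis
    proof (cases s)
      case 0
      have "Some (a, 0) \<in> nbhd (mycV t V) (mycE t V E) (Some (u,s))"
        unfolding nbhd_myc using a 0 by auto
      moreover have "Some (a, 0) \<noteq> Some (a, Suc s)" by simp
      ultimately show ?thesis using y1 by (intro exI[of _ "Some (a, 0)"] exI[of _ "Some (a, Suc s)"] conjI)
    next
      case (Suc s')
      have "Some (a, s') \<in> nbhd (mycV t V) (mycE t V E) (Some (u,s))"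
        unfolding nbhd_myc using a Suc True by auto
      moreover have "Some (a, s') \<noteq> Some (a, Suc s)" using Suc by simp
      ultimately show ?thesis using y1 by (intro exI[of _ "Some (a, s')"] exI[of _ "Some (a, Suc s)"] conjI)
    qed
  next
    case False
    then have st: "s = t" using assms by auto
    have y1: "None \<in> nbhd (mycV t V) (mycE t V E) (Some (u,s))"
      unfolding nbhd_myc using assms st by auto
    have "Some (a, t - 1) \<in> nbhd (mycV t V) (mycE t V E) (Some (u,s))"
      unfolding nbhd_myc using a st assms(5) by auto
    moreover have "Some (a, t - 1) \<noteq> None" by simp
    ultimately show ?thesis using y1 by (intro exI[of _ "Some (a, t - 1)"] exI[of _ "None"] conjI)
  qed
qed



lemma class_iso_iff:
  assumes "isolated V E v0" "u \<in> V"
  shows "twin_class V E u = twin_class V E v0 \<longleftrightarrow> nbhd V E u = {}"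
  using twin_class_eq[of u V v0 E] assms unfolding isolated_def by auto

lemma lower_bound:
  assumes sg: "sgraph V E" and iso: "isolated V E v0" and t1: "1 \<le> t" and T: "min_twin_cover V E T"
  shows "(t+1)*card T + t - 1 \<le> det_num (mycV t V) (mycE t V E)"
proof -
  have fin: "finite V" using sg unfolding sgraph_def by auto
  have v0: "v0 \<in> V" "nbhd V E v0 = {}" using iso unfolding isolated_def by auto
  define Iso where "Iso = twin_class V E v0"
  define \<phi> where "\<phi> x = (case x of None \<Rightarrow> None
        | Some (v,s) \<Rightarrow> Some (twin_class V E v, if nbhd V E v = {} \<and> s < t then 0 else s))" for x
  let ?M = "mycV t V" and ?ME = "mycE t V E"
  have sgM: "sgraph ?M ?ME" using sgraph_myc[OF sg] .
  have phi: "twins ?M ?ME x y" if x: "x \<in> ?M" and y: "y \<in> ?M" and e: "\<phi> x = \<phi> y" for x y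
  proof (cases x)
    case None
    then have "y = None" using e unfolding \<phi>_def by (cases y) auto
    then show ?thesis using None x unfolding twins_def by simp
  next
    case (Some p)
    then obtain u s where xs: "x = Some (u,s)" by (cases p) auto
    obtain v r where ys: "y = Some (v,r)" using e xs unfolding \<phi>_def by (cases y) auto
    have uv: "u \<in> V" "v \<in> V" "s \<le> t" "r \<le> t" using x y xs ys by auto
    have cl: "twin_class V E u = twin_class V E v"
      and lv: "(if nbhd V E u = {} \<and> s < t then 0 else s) = (if nbhd V E v = {} \<and> r < t then 0 else r)"
      using e xs ys unfolding \<phi>_def by auto
    have nb: "nbhd V E u = nbhd V E v" using cl twin_class_eq[of u V v E] uv by auto
    have same: "nbhd ?M ?ME (Some (u,s')) = nbhd ?M ?ME (Some (v,s'))" for s'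
      unfolding nbhd_myc using madj_Some_Some_same_nbhd[OF sg uv(1,2) nb] by auto
    show ?thesis
    proof (cases "nbhd V E u = {} \<and> s < t \<and> r < t")
      case True
      then have "nbhd ?M ?ME x = {}" "nbhd ?M ?ME y = {}"
        using nbhd_iso_low[OF sg] xs ys uv nb by auto
      then show ?thesis using x y unfolding twins_def by simp
    next
      case False
      then have "s = r" using lv nb t1 by (auto split: if_splits)
      then show ?thesis using x y xs ys same unfolding twins_def by simp
    qed
  qed
  let ?Q = "quotV V E"
  have IsoQ: "Iso \<in> ?Q" unfolding Iso_def quotV_def using v0 by auto
  have img: "\<phi> ` ?M \<subseteq> insert None (Some ` (((?Q - {Iso}) \<times> {..t}) \<union> {(Iso,0),(Iso,t)}))"
  proof
    fix z assume "z \<in> \<phi> ` ?M"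
    then obtain x where x: "x \<in> ?M" "z = \<phi> x" by blast
    show "z \<in> insert None (Some ` (((?Q - {Iso}) \<times> {..t}) \<union> {(Iso,0),(Iso,t)}))"
    proof (cases x)
      case None then show ?thesis using x unfolding \<phi>_def by simp
    next
      case (Some p)
      then obtain u s where xs: "x = Some (u,s)" by (cases p) auto
      have u: "u \<in> V" "s \<le> t" using x xs by auto
      have cq: "twin_class V E u \<in> ?Q" unfolding quotV_def using u by auto
      have ci: "twin_class V E u = Iso \<longleftrightarrow> nbhd V E u = {}" unfolding Iso_def using class_iso_iff[OF iso u(1)] .
      show ?thesis
      proof (cases "nbhd V E u = {}")
        case True
        then have cI: "twin_class V E u = Iso" using ci by simp
        show ?thesis
        proof (cases "s < t")
          case True
          then have "z = Some (Iso, 0)" using x(2) xs cI \<open>nbhd V E u = {}\<close> unfolding \<phi>_def by simp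
          then show ?thesis by blast
        next
          case False
          then have "z = Some (Iso, t)" using x(2) xs cI u(2) unfolding \<phi>_def by simp
          then show ?thesis by blast
        qed
      next
        case False
        then have "z = Some (twin_class V E u, s)" using x(2) xs unfolding \<phi>_def by simp
        moreover have "twin_class V E u \<noteq> Iso" using ci False by simp
        ultimately show ?thesis using cq u(2) by blast
      qed
    qed
  qed
  have finQ: "finite ?Q" unfolding quotV_def using fin by auto
  have "card (\<phi> ` ?M) \<le> card (insert None (Some ` (((?Q - {Iso}) \<times> {..t}) \<union> {(Iso,0),(Iso,t)})))"
    by (rule card_mono[OF _ img]) (use finQ in auto)
  also have "\<dots> \<le> Suc (card (Some ` (((?Q - {Iso}) \<times> {..t}) \<union> {(Iso,0),(Iso,t)})))"
    by (rule card_insert_le_m1) auto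
  also have "card (Some ` (((?Q - {Iso}) \<times> {..t}) \<union> {(Iso,0),(Iso,t)})) \<le> card (((?Q - {Iso}) \<times> {..t})) + card {(Iso,0),(Iso,t)}"
  proof -
    have "card (Some ` (((?Q - {Iso}) \<times> {..t}) \<union> {(Iso,0),(Iso,t)})) = card (((?Q - {Iso}) \<times> {..t}) \<union> {(Iso,0),(Iso,t)})"
      by (intro card_image inj_onI) simp
    also have "\<dots> \<le> card (((?Q - {Iso}) \<times> {..t})) + card {(Iso,0),(Iso,t)}" by (rule card_Un_le)
    finally show ?thesis .
  qed
  also have "card {(Iso,0),(Iso,t)} \<le> 2" by (simp add: card_insert_le_m1)
  also have "card (((?Q - {Iso}) \<times> {..t})) = (card ?Q - 1) * (t+1)"
    by (simp add: card_cartesian_product IsoQ finQ)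
  finally have cim: "card (\<phi> ` ?M) \<le> (card ?Q - 1) * (t+1) + 3" by simp
  have ct: "card T + card ?Q = card V" using card_min_twin_cover[OF fin T] .
  have q1: "1 \<le> card ?Q" proof -
    have "card ?Q \<noteq> 0" using IsoQ finQ by (auto simp: card_0_eq)
    then show ?thesis by simp
  qed
  show ?thesis
  proof (rule det_num_ge)
    show "finite ?M" using finite_mycV[OF fin] .
    fix S assume S: "determining_set ?M ?ME S"
    have "card ?M \<le> card S + card (\<phi> ` ?M)" using det_lower[OF sgM phi S] by blast
    then have h: "card V * (t+1) + 1 \<le> card S + ((card ?Q - 1) * (t+1) + 3)" using cim card_mycV[OF fin] by simp
    have e1: "card V * (t+1) = card T * (t+1) + card ?Q * (t+1)" using ct by (metis add_mult_distrib)
    have e2: "(card ?Q - 1) * (t+1) + (t+1) = card ?Q * (t+1)" using q1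
      by (metis Suc_eq_plus1 add.commute le_add_diff_inverse mult_Suc)
    show "(t+1)*card T + t - 1 \<le> card S" 
    proof -
      have "(t+1)*card T = card T*(t+1)" by simp
      then show ?thesis using h e1 e2 t1 by linarith
    qed
  qed
qed



lemma quotE_iff: "{A,B} \<in> quotE V E \<longleftrightarrow> A \<in> quotV V E \<and> B \<in> quotV V E \<and> (\<exists>a\<in>A. \<exists>b\<in>B. {a,b}\<in>E)"
proof
  assume "{A,B} \<in> quotE V E"
  then obtain A' B' where h: "{A,B} = {A',B'}" "A' \<in> quotV V E" "B' \<in> quotV V E" "\<exists>a\<in>A'. \<exists>b\<in>B'. {a,b}\<in>E"
    unfolding quotE_def mem_Collect_eq by (elim exE conjE) (simp only:)
  from h(1) have "(A = A' \<and> B = B') \<or> (A = B' \<and> B = A')" by (simp add: doubleton_eq_iff)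
  then show "A \<in> quotV V E \<and> B \<in> quotV V E \<and> (\<exists>a\<in>A. \<exists>b\<in>B. {a,b}\<in>E)"
  proof
    assume "A = A' \<and> B = B'" then show ?thesis using h by simp
  next
    assume e: "A = B' \<and> B = A'"
    from h(4) obtain a b where ab: "a \<in> A'" "b \<in> B'" "{a,b} \<in> E" by blast
    have "{b,a} \<in> E" using ab(3) by (simp add: insert_commute)
    then show ?thesis using h e ab by blast
  qed
next
  assume h: "A \<in> quotV V E \<and> B \<in> quotV V E \<and> (\<exists>a\<in>A. \<exists>b\<in>B. {a,b}\<in>E)"
  show "{A,B} \<in> quotE V E" unfolding quotE_def mem_Collect_eq
    by (rule exI[of _ A], rule exI[of _ B]) (use h in simp)
qed

lemma twin_class_sub: "twin_class V E v \<subseteq> V"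
  unfolding twin_class_def by auto
lemma tw_aux:
  assumes a: "automorphism V E g" and v: "v \<in> V" and u: "u \<in> V"
  shows "nbhd V E (g u) = nbhd V E (g v) \<longleftrightarrow> nbhd V E u = nbhd V E v"
proof -
  have b: "bij_betw g V V" using a unfolding automorphism_def by auto
  have inj: "inj_on g V" using b bij_betw_def by blast
  have "nbhd V E (g u) = g ` nbhd V E u" "nbhd V E (g v) = g ` nbhd V E v"
    using aut_nbhd[OF a] u v by auto
  moreover have "nbhd V E u \<subseteq> V" "nbhd V E v \<subseteq> V" unfolding nbhd_def by auto
  ultimately show ?thesis using inj_on_image_eq_iff[OF inj] by simp
qed

lemma aut_class:
  assumes a: "automorphism V E g" and v: "v \<in> V"
  shows "g ` twin_class V E v = twin_class V E (g v)"
proof -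
  have b: "bij_betw g V V" using a unfolding automorphism_def by auto
  have gV: "g ` V = V" using b by (simp add: bij_betw_def)
  show ?thesis
  proof
    show "g ` twin_class V E v \<subseteq> twin_class V E (g v)"
    proof
      fix w assume "w \<in> g ` twin_class V E v"
      then obtain u where u0: "u \<in> twin_class V E v" "w = g u" by blast
      then have u: "u \<in> V" "nbhd V E u = nbhd V E v" unfolding twin_class_def twins_def by auto
      have "g u \<in> V" "g v \<in> V" using u(1) v gV by (metis imageI)+
      moreover have "nbhd V E (g u) = nbhd V E (g v)" using tw_aux[OF a v u(1)] u(2) by simp
      ultimately show "w \<in> twin_class V E (g v)" using u0(2) unfolding twin_class_def twins_def by simp
    qed
    show "twin_class V E (g v) \<subseteq> g ` twin_class V E v"
    proof
      fix w assume w: "w \<in> twin_class V E (g v)"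
      then have "w \<in> V" unfolding twin_class_def by auto
      then obtain u where u: "u \<in> V" "w = g u" using gV by (metis imageE)
      then have "nbhd V E (g u) = nbhd V E (g v)" using w unfolding twin_class_def twins_def by auto
      then have "nbhd V E u = nbhd V E v" using tw_aux[OF a v u(1)] by simp
      then have "u \<in> twin_class V E v" using u v unfolding twin_class_def twins_def by simp
      then show "w \<in> g ` twin_class V E v" using u(2) by blast
    qed
  qed
qed

lemma aut_quot:
  assumes a: "automorphism V E g" and fin: "finite V"
  shows "automorphism (quotV V E) (quotE V E) (\<lambda>C. g ` C)"
proof -
  have b: "bij_betw g V V" using a unfolding automorphism_def by (elim conjE)
  have inj: "inj_on g V" using b by (simp add: bij_betw_def)
  have gV: "g ` V = V" using b by (simp add: bij_betw_def)
  have ed: "\<forall>x\<in>V. \<forall>y\<in>V. {x, y} \<in> E \<longleftrightarrow> {g x, g y} \<in> E" using a unfolding automorphism_def by (elim conjE)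
  have sub: "C \<subseteq> V" if CQ: "C \<in> quotV V E" for C
  proof -
    obtain v where "C = twin_class V E v" using CQ unfolding quotV_def by blast
    then show ?thesis using twin_class_sub[of V E v] by simp
  qed
  have into: "(\<lambda>C. g ` C) ` quotV V E \<subseteq> quotV V E"
  proof
    fix D assume "D \<in> (\<lambda>C. g ` C) ` quotV V E"
    then obtain v where v: "v \<in> V" "D = g ` twin_class V E v" unfolding quotV_def by auto
    then have "D = twin_class V E (g v)" using aut_class[OF a] by simp
    moreover have "g v \<in> V" using v gV by (metis imageI)
    ultimately show "D \<in> quotV V E" unfolding quotV_def by auto
  qed
  have injq: "inj_on (\<lambda>C. g ` C) (quotV V E)"
  proof (rule inj_onI)
    fix C1 C2 assume C: "C1 \<in> quotV V E" "C2 \<in> quotV V E" "g ` C1 = g ` C2"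
    then show "C1 = C2" using inj_on_image_eq_iff[OF inj sub[OF C(1)] sub[OF C(2)]] by simp
  qed
  have finq: "finite (quotV V E)" unfolding quotV_def using fin by auto
  have bq: "bij_betw (\<lambda>C. g ` C) (quotV V E) (quotV V E)"
    unfolding bij_betw_def using injq endo_inj_surj[OF finq into injq] by blast
  have "{A, B} \<in> quotE V E \<longleftrightarrow> {g ` A, g ` B} \<in> quotE V E" if A: "A \<in> quotV V E" and B: "B \<in> quotV V E" for A B
  proof -
    have gA: "g ` A \<in> quotV V E" "g ` B \<in> quotV V E" using into A B by auto
    have "(\<exists>a\<in>A. \<exists>b\<in>B. {a,b}\<in>E) \<longleftrightarrow> (\<exists>a\<in>g ` A. \<exists>b\<in>g ` B. {a,b}\<in>E)"
    proof
      assume "\<exists>a\<in>A. \<exists>b\<in>B. {a,b}\<in>E"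
      then obtain a b where ab: "a \<in> A" "b \<in> B" "{a,b} \<in> E" by blast
      then have "a \<in> V" "b \<in> V" using sub[OF A] sub[OF B] by auto
      then have "{g a, g b} \<in> E" using ed[rule_format, of a b] ab(3) by simp
      then show "\<exists>a\<in>g ` A. \<exists>b\<in>g ` B. {a,b}\<in>E" using ab(1,2) by (meson imageI)
    next
      assume "\<exists>a\<in>g ` A. \<exists>b\<in>g ` B. {a,b}\<in>E"
      then obtain a b where ab: "a \<in> A" "b \<in> B" "{g a, g b} \<in> E" by blast
      then have "a \<in> V" "b \<in> V" using sub[OF A] sub[OF B] by auto
      then have "{a, b} \<in> E" using ed[rule_format, of a b] ab(3) by simp
      then show "\<exists>a\<in>A. \<exists>b\<in>B. {a,b}\<in>E" using ab(1,2) by blast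
    qed
    then show ?thesis unfolding quotE_iff using A B gA by simp
  qed
  then show ?thesis unfolding automorphism_def using bq by blast
qed



definition freeset :: "nat \<Rightarrow> 'a set \<Rightarrow> 'a \<Rightarrow> ('a \<times> nat) option set" where
  "freeset t R r0 = insert None (Some ` ({(r0,0),(r0,t)} \<union> ((R - {r0}) \<times> {..t})))"

definition Sset :: "nat \<Rightarrow> 'a set \<Rightarrow> 'a set set \<Rightarrow> 'a set set \<Rightarrow> 'a \<Rightarrow> ('a \<times> nat) option set" where
  "Sset t V E D r0 = (mycV t V - freeset t (reps V E) r0) \<union> (\<lambda>r. Some (r,0)) ` {r \<in> reps V E. twin_class V E r \<in> D}"

lemma reps_iso_unique:
  assumes "r \<in> reps V E" "r0 \<in> reps V E" "nbhd V E r = {}" "nbhd V E r0 = {}"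
  shows "r = r0"
proof -
  have "r \<in> V" "r0 \<in> V" using assms(1,2) reps_props(1)[where V=V and E=E] by blast+
  then have "twins V E r r0" using assms(3,4) unfolding twins_def by simp
  then show ?thesis by (rule reps_props(2)[where V=V and E=E, OF assms(1,2)])
qed

lemma in_Sset1:
  assumes "u \<in> V" "s \<le> t" "u \<notin> reps V E" "r0 \<in> reps V E"
  shows "Some (u,s) \<in> Sset t V E D r0"
proof -
  have "u \<noteq> r0" using assms by auto
  then have "Some (u,s) \<notin> freeset t (reps V E) r0" using assms(3) unfolding freeset_def by auto
  then show ?thesis using assms(1,2) unfolding Sset_def by simp
qed

lemma in_Sset2:
  assumes "r0 \<in> V" "0 < s" "s < t"
  shows "Some (r0,s) \<in> Sset t V E D r0"
  using assms unfolding Sset_def freeset_def by auto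

lemma in_Sset3:
  assumes "r \<in> reps V E" "twin_class V E r \<in> D"
  shows "Some (r,0) \<in> Sset t V E D r0"
  using assms unfolding Sset_def by auto

lemma Sset_sub:
  assumes "r0 \<in> V"
  shows "Sset t V E D r0 \<subseteq> mycV t V"
proof -
  have "(\<lambda>r. Some (r,0)) ` {r \<in> reps V E. twin_class V E r \<in> D} \<subseteq> mycV t V"
    using reps_props(1)[where V=V and E=E] by auto
  then show ?thesis unfolding Sset_def by blast
qed



lemma Sset_det:
  assumes sg: "sgraph V E" and t1: "1 \<le> t"
    and r0R: "r0 \<in> reps V E" and r0i: "nbhd V E r0 = {}"
    and dt: "has_distinct_twins V E"
    and Dd: "determining_set (quotV V E) (quotE V E) D"
  shows "determining_set (mycV t V) (mycE t V E) (Sset t V E D r0)"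
proof -
  let ?M = "mycV t V" and ?ME = "mycE t V E" and ?S = "Sset t V E D r0" and ?R = "reps V E"
  let ?N = "nbhd ?M ?ME"
  have fin: "finite V" using sg unfolding sgraph_def by auto
  have RV: "?R \<subseteq> V" by (rule reps_props(1))
  have r0V: "r0 \<in> V" using r0R RV by blast
  have RI: "r = r0" if "r \<in> ?R" "nbhd V E r = {}" for r
    using reps_iso_unique[OF that(1) r0R that(2) r0i] .
  have repeq: "r = r'" if "r \<in> ?R" "r' \<in> ?R" "twins V E r r'" for r r'
    by (rule reps_props(2)[where V=V and E=E, OF that])
  obtain a0 b0 where ab0: "a0 \<noteq> b0" "a0 \<in> V" "b0 \<in> V"
    using dt unfolding has_distinct_twins_def twins_def by blast
  have edgeV: "a \<in> V" "b \<in> V" if "{a,b} \<in> E" for a b using sgraph_edge[OF sg that] by auto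
  show ?thesis
    unfolding determining_set_def
  proof (intro conjI allI impI)
    show "?S \<subseteq> ?M" by (rule Sset_sub[OF r0V])
    fix f assume fa: "automorphism ?M ?ME f" and fS: "\<forall>x\<in>?S. f x = x"
    have fb: "bij_betw f ?M ?M" using fa unfolding automorphism_def by (elim conjE)
    have finj: "inj_on f ?M" using fb by (simp add: bij_betw_def)
    have fM: "f x \<in> ?M" if "x \<in> ?M" for x using fb that by (meson bij_betwE)
    have fadj: "madj t V E (f x) (f y) \<longleftrightarrow> madj t V E x y" if "x \<in> ?M" "y \<in> ?M" for x y
      using aut_madj[OF fa that] .
    have fnb: "?N (f x) = f ` ?N x" if "x \<in> ?M" for x using aut_nbhd[OF fa that] .
    have fSx: "f x = x" if "x \<in> ?S" for x using fS that by blast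
    have finjx: "x = y" if "x \<in> ?M" "y \<in> ?M" "f x = f y" for x y
      using finj that unfolding inj_on_def by blast
    have FIX: "f x = x" if "x \<in> ?M" "f x \<in> ?S" for x
    proof -
      have "f (f x) = f x" using fSx[OF that(2)] .
      then show ?thesis using finjx[OF fM[OF that(1)] that(1)] by blast
    qed
    have inS1: "Some (u,s) \<in> ?S" if "u \<in> V" "s \<le> t" "u \<notin> ?R" for u s
      using in_Sset1[OF that r0R] .
    have step1: "f (Some (r0,0)) = Some (r0,0)"
    proof -
      let ?x = "Some (r0,0)"
      have xM: "?x \<in> ?M" using r0V by simp
      have "?N ?x = {}" using nbhd_iso_low[OF sg r0V r0i] t1 by simp
      then have Ne: "?N (f ?x) = {}" using fnb[OF xM] by simp
      show ?thesis
      proof (cases "f ?x")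
        case None
        have "Some (r0,t) \<in> ?N None" using nbhd_None r0V by blast
        then show ?thesis using Ne None by simp
      next
        case (Some p)
        then obtain u s where fx: "f ?x = Some (u,s)" by (cases p) auto
        have us: "u \<in> V" "s \<le> t" using fM[OF xM] fx by auto
        have ui: "nbhd V E u = {}"
        proof (rule ccontr)
          assume "nbhd V E u \<noteq> {}"
          then obtain y1 y2 where "y1 \<in> ?N (Some (u,s))" using nbhd_nonisolated_two[OF sg us(1) _ us(2) t1] by blast
          then show False using Ne fx by simp
        qed
        have st: "s < t"
        proof (rule ccontr)
          assume "\<not> s < t"
          then have "s = t" using us by simp
          then have "?N (f ?x) = {None}" using fx nbhd_iso_top[OF sg us(1) ui] by simp
          then show False using Ne by simp
        qed
        show ?thesis
        proof (cases "u \<in> ?R")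
          case False
          then show ?thesis using FIX[OF xM] inS1[OF us False] fx by simp
        next
          case True
          then have "u = r0" using RI ui by blast
          show ?thesis
          proof (cases "s = 0")
            case True then show ?thesis using fx \<open>u = r0\<close> by simp
          next
            case False
            then have "f ?x \<in> ?S" using in_Sset2[OF r0V _ st] fx \<open>u = r0\<close> by simp
            then show ?thesis using FIX[OF xM] by simp
          qed
        qed
      qed
    qed
    have step2: "f (Some (r0,t)) = Some (r0,t)"
    proof -
      let ?x = "Some (r0,t)"
      have xM: "?x \<in> ?M" using r0V by simp
      have "?N ?x = {None}" using nbhd_iso_top[OF sg r0V r0i] by simp
      then have Ne: "?N (f ?x) = {f None}" using fnb[OF xM] by simp
      show ?thesis
      proof (cases "f ?x")
        case None
        have "Some (a0,t) \<in> ?N None" "Some (b0,t) \<in> ?N None" using nbhd_None ab0 by blast+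
        then have "Some (a0,t) = Some (b0,t)" using Ne None by simp
        then show ?thesis using ab0 by simp
      next
        case (Some p)
        then obtain u s where fx: "f ?x = Some (u,s)" by (cases p) auto
        have us: "u \<in> V" "s \<le> t" using fM[OF xM] fx by auto
        have ui: "nbhd V E u = {}"
        proof (rule ccontr)
          assume "nbhd V E u \<noteq> {}"
          then obtain y1 y2 where "y1 \<noteq> y2" "y1 \<in> ?N (Some (u,s))" "y2 \<in> ?N (Some (u,s))"
            using nbhd_nonisolated_two[OF sg us(1) _ us(2) t1] by blast
          then show False using Ne fx by simp
        qed
        have st: "s = t"
        proof (rule ccontr)
          assume "s \<noteq> t"
          then have "s < t" using us by simp
          then have "?N (f ?x) = {}" using fx nbhd_iso_low[OF sg us(1) ui] by simp
          then show False using Ne by simp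
        qed
        show ?thesis
        proof (cases "u \<in> ?R")
          case False
          then show ?thesis using FIX[OF xM] inS1[OF us False] fx by simp
        next
          case True
          then have "u = r0" using RI ui by blast
          then show ?thesis using fx st by simp
        qed
      qed
    qed
    have step3: "f None = None"
    proof -
      have xM: "Some (r0,t) \<in> ?M" using r0V by simp
      have "None \<in> ?N (Some (r0,t))" using nbhd_iso_top[OF sg r0V r0i] by simp
      then have "f None \<in> ?N (f (Some (r0,t)))" using fnb[OF xM] by blast
      then show ?thesis using step2 nbhd_iso_top[OF sg r0V r0i] by simp
    qed
    define A where "A s = Some ` ({u \<in> V. nbhd V E u \<noteq> {}} \<times> {s})" for s :: nat
    have AM: "A s \<subseteq> ?M" if "s \<le> t" for s using that unfolding A_def by auto
    have finA: "finite (A s)" for s unfolding A_def using fin by auto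
    have Aeq: "f ` A s = A s" if "s \<le> t" "f ` A s \<subseteq> A s" for s
      using endo_inj_surj[OF finA that(2) inj_on_subset[OF finj AM[OF that(1)]]] .
    have memA: "Some (u,s) \<in> A s \<longleftrightarrow> u \<in> V \<and> nbhd V E u \<noteq> {}" for u s
      unfolding A_def by auto
    have nbI: "nbhd V E b \<noteq> {}" if "{b,a} \<in> E" for a b
    proof -
      have "a \<in> V" using edgeV[OF that] by simp
      then have "a \<in> nbhd V E b" using that unfolding nbhd_def by (simp add: insert_commute)
      then show ?thesis by blast
    qed
    have step4: "\<forall>s. t - s = k \<longrightarrow> s \<le> t \<longrightarrow> f ` A s \<subseteq> A s" for k
    proof (induction k rule: less_induct)
      case (less k)
      show ?case
      proof (intro allI impI)
        fix s assume ks: "t - s = k" and st: "s \<le> t"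
        show "f ` A s \<subseteq> A s"
        proof
          fix y assume "y \<in> f ` A s"
          then obtain z where z: "z \<in> A s" "y = f z" by blast
          then obtain u where u: "z = Some (u,s)" "u \<in> V" "nbhd V E u \<noteq> {}" unfolding A_def by auto
          obtain a where a: "a \<in> V" "{a,u} \<in> E" using u(3) unfolding nbhd_def by auto
          have zM: "z \<in> ?M" using u st by simp
          show "y \<in> A s"
          proof (cases "s = t")
            case True
            have "z \<in> ?N None" using nbhd_None u True by blast
            then have "f z \<in> ?N (f None)" using fnb[of None] by simp
            then have "f z \<in> Some ` (V \<times> {t})" using step3 by (simp add: nbhd_None)
            then obtain u' where u': "f z = Some (u',t)" "u' \<in> V" by auto
            have aM: "Some (a, t-1) \<in> ?M" using a by simp
            have "madj t V E (Some (a,t-1)) z" using a u True t1 by simp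
            then have "madj t V E (f (Some (a,t-1))) (f z)" using fadj[OF aM zM] by simp
            then have fa_in: "f (Some (a,t-1)) \<in> ?N (Some (u',t))" using u' fM[OF aM] unfolding nbhd_myc by simp
            have "nbhd V E u' \<noteq> {}"
            proof
              assume "nbhd V E u' = {}"
              then have "f (Some (a,t-1)) = f None" using fa_in nbhd_iso_top[OF sg u'(2)] step3 by simp
              then have "Some (a,t-1) = None" using finjx[OF aM None_in_mycV] by blast
              then show False by simp
            qed
            then show ?thesis using z(2) u' True memA by simp
          next
            case False
            then have slt: "s < t" using st by simp
            have IH1: "f ` A (Suc s) \<subseteq> A (Suc s)" using less.IH[of "t - Suc s"] slt ks by simp
            have aA: "Some (a, Suc s) \<in> A (Suc s)" using memA a nbI[of a u] by (simp add: insert_commute)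
            obtain a' where a': "f (Some (a, Suc s)) = Some (a', Suc s)" "a' \<in> V" "nbhd V E a' \<noteq> {}"
              using IH1 aA unfolding A_def by blast
            have aM: "Some (a, Suc s) \<in> ?M" using a slt by simp
            have "madj t V E z (Some (a, Suc s))" using a u slt by (simp add: insert_commute)
            then have m: "madj t V E (f z) (Some (a', Suc s))" using fadj[OF zM aM] a'(1) by simp
            show ?thesis
            proof (cases "f z")
              case None
              then have "f z = f None" using step3 by simp
              then have "z = None" using finjx[OF zM None_in_mycV] by blast
              then show ?thesis using u by simp
            next
              case (Some p)
              then obtain b r where fz: "f z = Some (b,r)" by (cases p) auto
              have e: "{b,a'} \<in> E" and lv: "(r = 0 \<and> Suc s = 0) \<or> (Suc s = Suc r \<and> r < t) \<or> (r = Suc (Suc s) \<and> Suc s < t)"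
                using m fz by simp_all
              have bV: "b \<in> V" using edgeV[OF e] by simp
              have bI: "nbhd V E b \<noteq> {}" using nbI[OF e] .
              show ?thesis
              proof (cases "r = s")
                case True
                then show ?thesis using z(2) fz bV bI memA by simp
              next
                case False
                then have r2: "r = Suc (Suc s)" "Suc (Suc s) \<le> t" using lv by auto
                have IH2: "f ` A (Suc (Suc s)) \<subseteq> A (Suc (Suc s))"
                  using less.IH[of "t - Suc (Suc s)"] r2 ks by simp
                have eq2: "f ` A (Suc (Suc s)) = A (Suc (Suc s))" using Aeq[OF r2(2) IH2] .
                have "Some (b, Suc (Suc s)) \<in> A (Suc (Suc s))" using memA bV bI by simp
                then obtain z' where z': "z' \<in> A (Suc (Suc s))" "f z' = Some (b, Suc (Suc s))"
                  using eq2 by (metis imageE)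
                have z'M: "z' \<in> ?M" using AM[OF r2(2)] z'(1) by blast
                have "z = z'" using finjx[OF zM z'M] fz z'(2) r2 by simp
                then show ?thesis using z'(1) u unfolding A_def by auto
              qed
            qed
          qed
        qed
      qed
    qed
    have Ainv: "f ` A s = A s" if "s \<le> t" for s using Aeq[OF that] step4[of "t - s"] that by blast
    have Alev: "\<exists>u'. f (Some (u,s)) = Some (u',s) \<and> u' \<in> V \<and> nbhd V E u' \<noteq> {}"
      if "u \<in> V" "nbhd V E u \<noteq> {}" "s \<le> t" for u s
    proof -
      have "Some (u,s) \<in> A s" using memA that by simp
      then have "f (Some (u,s)) \<in> A s" using Ainv[OF that(3)] by blast
      then show ?thesis unfolding A_def by auto
    qed
    define g where "g v = (case f (Some (v,0)) of Some p \<Rightarrow> fst p | None \<Rightarrow> v)" for v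
    have G0: "f (Some (v,0)) = Some (g v, 0) \<and> g v \<in> V" if v: "v \<in> V" for v
    proof (cases "nbhd V E v = {}")
      case False
      then obtain u' where "f (Some (v,0)) = Some (u',0)" "u' \<in> V" using Alev[OF v False] by auto
      then show ?thesis unfolding g_def by simp
    next
      case True
      show ?thesis
      proof (cases "v \<in> ?R")
        case True
        then have "v = r0" using RI \<open>nbhd V E v = {}\<close> by blast
        then show ?thesis using step1 v unfolding g_def by simp
      next
        case False
        then have "f (Some (v,0)) = Some (v,0)" using fSx inS1[OF v _ False] by simp
        then show ?thesis using v unfolding g_def by simp
      qed
    qed
    have gfix1: "g v = v" if "v \<in> V" "v \<notin> ?R" for v
    proof -
      have "f (Some (v,0)) = Some (v,0)" using fSx inS1[OF that(1) _ that(2)] by simp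
      then show ?thesis using G0[OF that(1)] by simp
    qed
    have gfixD: "g r = r" if "r \<in> ?R" "twin_class V E r \<in> D" for r
    proof -
      have "f (Some (r,0)) = Some (r,0)" using fSx in_Sset3[OF that] by blast
      then show ?thesis using G0[of r] that(1) RV by auto
    qed
    have ginj: "inj_on g V"
    proof (rule inj_onI)
      fix v w assume vw: "v \<in> V" "w \<in> V" "g v = g w"
      then have "f (Some (v,0)) = f (Some (w,0))" using G0[OF vw(1)] G0[OF vw(2)] by simp
      moreover have "Some (v,0) \<in> ?M" "Some (w,0) \<in> ?M" using vw by simp_all
      ultimately have "Some (v,0) = Some (w,0)" using finjx by blast
      then show "v = w" by simp
    qed
    have gV: "g ` V \<subseteq> V" using G0 by blast
    have gaut: "automorphism V E g"
      unfolding automorphism_def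
    proof (intro conjI ballI)
      show "bij_betw g V V" unfolding bij_betw_def using ginj endo_inj_surj[OF fin gV ginj] by blast
      fix x y assume xy: "x \<in> V" "y \<in> V"
      have xM: "Some (x,0) \<in> ?M" "Some (y,0) \<in> ?M" using xy by simp_all
      have "{x,y} \<in> E \<longleftrightarrow> madj t V E (Some (x,0)) (Some (y,0))" by simp
      also have "\<dots> \<longleftrightarrow> madj t V E (f (Some (x,0))) (f (Some (y,0)))" using fadj[OF xM] by simp
      also have "\<dots> \<longleftrightarrow> madj t V E (Some (g x,0)) (Some (g y,0))" using G0[OF xy(1)] G0[OF xy(2)] by simp
      also have "\<dots> \<longleftrightarrow> {g x, g y} \<in> E" by simp
      finally show "{x,y} \<in> E \<longleftrightarrow> {g x, g y} \<in> E" .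
    qed
    have qaut: "automorphism (quotV V E) (quotE V E) (\<lambda>C. g ` C)" using aut_quot[OF gaut fin] .
    have DQ: "D \<subseteq> quotV V E" using Dd unfolding determining_set_def by blast
    have classrep: "\<exists>r\<in>?R. C = twin_class V E r" if CQ: "C \<in> quotV V E" for C
    proof -
      obtain v where v: "v \<in> V" "C = twin_class V E v" using CQ unfolding quotV_def by blast
      obtain r where r: "r \<in> ?R" "twins V E v r" using reps_props(3)[OF v(1)] by blast
      have "twin_class V E v = twin_class V E r" using twin_class_eq[of v V r E] r v RV unfolding twins_def by blast
      then show ?thesis using r v by blast
    qed
    have "\<forall>C\<in>D. g ` C = C"
    proof
      fix C assume C: "C \<in> D"
      then obtain r where r: "r \<in> ?R" "C = twin_class V E r" using classrep DQ by blast
      have "g r = r" using gfixD r C by blast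
      then show "g ` C = C" using aut_class[OF gaut, of r] r RV by auto
    qed
    then have allC: "\<forall>C\<in>quotV V E. g ` C = C" using Dd qaut unfolding determining_set_def by blast
    have gtw: "nbhd V E (g v) = nbhd V E v" if v: "v \<in> V" for v
    proof -
      have gv: "g v \<in> V" using G0[OF v] by blast
      have "twin_class V E v \<in> quotV V E" using v unfolding quotV_def by blast
      then have "g ` twin_class V E v = twin_class V E v" using allC by blast
      then have "twin_class V E (g v) = twin_class V E v" using aut_class[OF gaut v] by simp
      then show ?thesis using twin_class_eq[OF gv v] by simp
    qed
    have gid: "g v = v" if v: "v \<in> V" for v
    proof (cases "v \<in> ?R")
      case False then show ?thesis using gfix1 v by blast
    next
      case True
      have gv: "g v \<in> V" using G0[OF v] by blast
      show ?thesis
      proof (cases "g v \<in> ?R")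
        case True
        have "twins V E (g v) v" using gtw[OF v] gv v unfolding twins_def by simp
        then show ?thesis using repeq[OF True \<open>v \<in> ?R\<close>] by blast
      next
        case False
        then have "g (g v) = g v" using gfix1 gv by blast
        then show ?thesis using ginj gv v unfolding inj_on_def by blast
      qed
    qed
    have step7: "\<forall>v\<in>V. f (Some (v,s)) = Some (v,s)" if "s \<le> t" for s
      using that
    proof (induction s)
      case 0
      then show ?case using G0 gid by simp
    next
      case (Suc s)
      show ?case
      proof
        fix v assume v: "v \<in> V"
        have xM: "Some (v, Suc s) \<in> ?M" using v Suc.prems by simp
        show "f (Some (v, Suc s)) = Some (v, Suc s)"
        proof (cases "v \<in> ?R")
          case False
          then show ?thesis using fSx inS1[OF v Suc.prems False] by blast
        next
          case vR: True
          show ?thesis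
          proof (cases "nbhd V E v = {}")
            case True
            then have "v = r0" using RI vR by blast
            show ?thesis
            proof (cases "Suc s = t")
              case True then show ?thesis using step2 \<open>v = r0\<close> by simp
            next
              case False
              then have "Some (r0, Suc s) \<in> ?S" using in_Sset2[OF r0V] Suc.prems by simp
              then show ?thesis using fSx \<open>v = r0\<close> by blast
            qed
          next
            case False
            obtain v' where v': "f (Some (v, Suc s)) = Some (v', Suc s)" "v' \<in> V" "nbhd V E v' \<noteq> {}"
              using Alev[OF v False Suc.prems] by blast
            have IH: "f (Some (a,s)) = Some (a,s)" if "a \<in> V" for a using Suc.IH Suc.prems that by simp
            have "{a,v} \<in> E \<longleftrightarrow> {a,v'} \<in> E" if a: "a \<in> V" for a
            proof -
              have aM: "Some (a,s) \<in> ?M" using a Suc.prems by simp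
              have "{a,v} \<in> E \<longleftrightarrow> madj t V E (Some (a,s)) (Some (v, Suc s))" using Suc.prems by simp
              also have "\<dots> \<longleftrightarrow> madj t V E (f (Some (a,s))) (f (Some (v, Suc s)))" using fadj[OF aM xM] by simp
              also have "\<dots> \<longleftrightarrow> madj t V E (Some (a,s)) (Some (v', Suc s))" using IH[OF a] v'(1) by simp
              also have "\<dots> \<longleftrightarrow> {a,v'} \<in> E" using Suc.prems by simp
              finally show ?thesis .
            qed
            then have "nbhd V E v = nbhd V E v'" unfolding nbhd_def by blast
            then have tw: "twins V E v v'" using v v'(2) unfolding twins_def by simp
            show ?thesis
            proof (cases "v' \<in> ?R")
              case True
              then show ?thesis using repeq[OF vR True tw] v'(1) by simp
            next
              case False
              have x'M: "Some (v', Suc s) \<in> ?M" using v'(2) Suc.prems by simp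
              have "f (Some (v', Suc s)) = Some (v', Suc s)" using fSx inS1[OF v'(2) Suc.prems False] by blast
              then have "Some (v', Suc s) = Some (v, Suc s)" using finjx[OF x'M xM] v'(1) by simp
              then show ?thesis using v'(1) by simp
            qed
          qed
        qed
      qed
    qed
    show "\<forall>x\<in>?M. f x = x"
    proof
      fix x assume x: "x \<in> ?M"
      show "f x = x"
      proof (cases x)
        case None then show ?thesis using step3 by simp
      next
        case (Some p)
        then obtain v s where "x = Some (v,s)" by (cases p) auto
        then show ?thesis using step7 x by simp
      qed
    qed
  qed
qed



lemma Sset_card:
  assumes fin: "finite V" and r0R: "r0 \<in> reps V E" and DQ: "D \<subseteq> quotV V E" and t1: "1 \<le> t"
  shows "card (Sset t V E D r0) + (3 + (card (quotV V E) - 1) * (t+1)) \<le> card (mycV t V) + card D"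
proof -
  let ?R = "reps V E" and ?Q = "quotV V E"
  have RV: "?R \<subseteq> V" by (rule reps_props(1))
  have finR: "finite ?R" using finite_subset[OF RV fin] .
  have cR: "card ?R = card ?Q" using card_reps[OF fin] .
  have r0V: "r0 \<in> V" using r0R RV by blast
  define Y where "Y = {(r0,0),(r0,t)} \<union> ((?R - {r0}) \<times> {..t})"
  have F: "freeset t ?R r0 = insert None (Some ` Y)" unfolding freeset_def Y_def by simp
  have finY: "finite Y" unfolding Y_def using finR by auto
  have "card {(r0,0),(r0,t)} = 2" using t1 by simp
  moreover have "card ((?R - {r0}) \<times> {..t}) = (card ?Q - 1) * (t+1)"
    using cR r0R finR by (simp add: card_cartesian_product)
  moreover have "{(r0,0),(r0,t)} \<inter> ((?R - {r0}) \<times> {..t}) = {}" by auto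
  ultimately have cY: "card Y = 2 + (card ?Q - 1) * (t+1)"
    unfolding Y_def using finR by (subst card_Un_disjoint) auto
  have "card (freeset t ?R r0) = Suc (card (Some ` Y))" unfolding F using finY by (subst card_insert_disjoint) auto
  also have "card (Some ` Y) = card Y" by (intro card_image inj_onI) simp
  finally have cF: "card (freeset t ?R r0) = 3 + (card ?Q - 1) * (t+1)" using cY by simp
  have FM: "freeset t ?R r0 \<subseteq> mycV t V" unfolding F Y_def using RV r0V by auto
  have finM: "finite (mycV t V)" using finite_mycV[OF fin] .
  have c1: "card (mycV t V - freeset t ?R r0) = card (mycV t V) - card (freeset t ?R r0)"
    using card_Diff_subset[OF finite_subset[OF FM finM] FM] .
  have c1': "card (freeset t ?R r0) \<le> card (mycV t V)" using card_mono[OF finM FM] .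
  define Rd where "Rd = {r \<in> ?R. twin_class V E r \<in> D}"
  have finQ: "finite ?Q" unfolding quotV_def using fin by simp
  have finD: "finite D" using finite_subset[OF DQ finQ] .
  have injc: "inj_on (twin_class V E) Rd"
  proof (rule inj_onI)
    fix x y assume x: "x \<in> Rd" and y: "y \<in> Rd" and e: "twin_class V E x = twin_class V E y"
    have xy: "x \<in> ?R" "y \<in> ?R" using x y unfolding Rd_def by auto
    then have "x \<in> V" "y \<in> V" using RV by auto
    then have "twins V E x y" using twin_class_eq[of x V y E] e unfolding twins_def by auto
    then show "x = y" by (rule reps_props(2)[where V=V and E=E, OF xy])
  qed
  have finRd: "finite Rd" unfolding Rd_def using finR by simp
  have "card ((\<lambda>r. Some (r,0::nat)) ` Rd) \<le> card Rd" using card_image_le[OF finRd] .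
  also have "card Rd = card (twin_class V E ` Rd)" using card_image[OF injc] by simp
  also have "\<dots> \<le> card D" by (rule card_mono[OF finD]) (auto simp: Rd_def)
  finally have c2: "card ((\<lambda>r. Some (r,0::nat)) ` Rd) \<le> card D" .
  have "card (Sset t V E D r0) \<le> card (mycV t V - freeset t ?R r0) + card ((\<lambda>r. Some (r,0::nat)) ` Rd)"
    unfolding Sset_def Rd_def using card_Un_le by blast
  then show ?thesis using c1 c1' c2 cF by linarith
qed

lemma upper_bound:
  assumes sg: "sgraph V E" and iso: "isolated V E v0" and dt: "has_distinct_twins V E"
    and t1: "1 \<le> t" and T: "min_twin_cover V E T"
  shows "det_num (mycV t V) (mycE t V E) \<le> det_num (quotV V E) (quotE V E) + (t+1)*card T + t - 1"
proof -
  have fin: "finite V" using sg unfolding sgraph_def by auto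
  have finQ: "finite (quotV V E)" unfolding quotV_def using fin by simp
  obtain D where D: "determining_set (quotV V E) (quotE V E) D" "card D = det_num (quotV V E) (quotE V E)"
    using det_num_attained[OF finQ] by blast
  have DQ: "D \<subseteq> quotV V E" using D(1) unfolding determining_set_def by blast
  have v0: "v0 \<in> V" "nbhd V E v0 = {}" using iso unfolding isolated_def by auto
  obtain r0 where r0: "r0 \<in> reps V E" "twins V E v0 r0" using reps_props(3)[OF v0(1)] by blast
  have r0i: "nbhd V E r0 = {}" using r0(2) v0(2) unfolding twins_def by simp
  have det: "determining_set (mycV t V) (mycE t V E) (Sset t V E D r0)"
    using Sset_det[OF sg t1 r0(1) r0i dt D(1)] .
  have "det_num (mycV t V) (mycE t V E) \<le> card (Sset t V E D r0)"
    using det_num_le[OF finite_mycV[OF fin] det] .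
  moreover have "card (Sset t V E D r0) + (3 + (card (quotV V E) - 1) * (t+1)) \<le> card (mycV t V) + card D"
    using Sset_card[OF fin r0(1) DQ t1] .
  moreover have "card (mycV t V) = card V * (t+1) + 1" using card_mycV[OF fin] .
  moreover have ct: "card T + card (quotV V E) = card V" using card_min_twin_cover[OF fin T] .
  moreover have q1: "1 \<le> card (quotV V E)"
  proof -
    have "twin_class V E v0 \<in> quotV V E" using v0 unfolding quotV_def by blast
    then have "card (quotV V E) \<noteq> 0" using finQ by (auto simp: card_0_eq)
    then show ?thesis by simp
  qed
  moreover have e1: "card V * (t+1) = card T * (t+1) + card (quotV V E) * (t+1)" using ct by (metis add_mult_distrib)
  moreover have e2: "(card (quotV V E) - 1) * (t+1) + (t+1) = card (quotV V E) * (t+1)" using q1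
    by (metis Suc_eq_plus1 add.commute le_add_diff_inverse mult_Suc)
  moreover have "(t+1)*card T = card T*(t+1)" by simp
  ultimately show ?thesis using D(2) t1 by linarith
qed

lemma general_part:
  "\<forall>(V :: 'a set) E T t.
            sgraph V E \<and> (\<exists>v. isolated V E v) \<and> has_distinct_twins V E \<and>
            min_twin_cover V E T \<and> t \<ge> 1 \<longrightarrow>
              (t + 1) * card T + t - 1 \<le> det_num (mycV t V) (mycE t V E) \<and>
              det_num (mycV t V) (mycE t V E)
                \<le> det_num (quotV V E) (quotE V E) + (t + 1) * card T + t - 1"
proof (intro allI impI conjI)
  fix V :: "'a set" and E T and t :: nat
  assume h: "sgraph V E \<and> (\<exists>v. isolated V E v) \<and> has_distinct_twins V E \<and> min_twin_cover V E T \<and> t \<ge> 1"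
  then obtain v0 where v0: "isolated V E v0" by blast
  show "(t + 1) * card T + t - 1 \<le> det_num (mycV t V) (mycE t V E)"
    using lower_bound[OF _ v0] h by blast
  show "det_num (mycV t V) (mycE t V E) \<le> det_num (quotV V E) (quotE V E) + (t + 1) * card T + t - 1"
    using upper_bound[OF _ v0] h by blast
qed



lemma example_props:
  fixes V :: "nat set" and E :: "nat set set"
  assumes VE: "V = {0,1}" "E = {}"
  shows "sgraph V E" "isolated V E 0" "has_distinct_twins V E" "min_twin_cover V E {0}"
    "det_num (quotV V E) (quotE V E) = 0"
proof -
  have nb: "nbhd V E v = {}" for v unfolding nbhd_def VE by simp
  show "sgraph V E" unfolding sgraph_def VE by simp
  show "isolated V E 0" unfolding isolated_def using nb VE by simp
  have tw: "twins V E u v \<longleftrightarrow> u \<in> V \<and> v \<in> V" for u v unfolding twins_def using nb by simp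
  show "has_distinct_twins V E" unfolding has_distinct_twins_def tw using VE by (intro exI[of _ "0::nat"] exI[of _ "1::nat"]) simp
  have tc: "twin_cover V E {0}" unfolding twin_cover_def tw using VE by auto
  have "1 \<le> card T'" if "twin_cover V E T'" for T'
  proof -
    have "T' \<subseteq> V" "0 \<in> T' \<or> 1 \<in> T'" using that VE unfolding twin_cover_def tw by auto
    moreover have "finite T'" using \<open>T' \<subseteq> V\<close> VE finite_subset by auto
    ultimately have "card T' \<noteq> 0" by auto
    then show ?thesis by simp
  qed
  then show "min_twin_cover V E {0}" unfolding min_twin_cover_def using tc by simp
  have cl: "twin_class V E v = V" if "v \<in> V" for v unfolding twin_class_def tw using that by auto
  have Q: "quotV V E = {V}" unfolding quotV_def using cl VE by auto
  have "determining_set (quotV V E) (quotE V E) {}"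
    unfolding determining_set_def
  proof (intro conjI allI impI)
    show "{} \<subseteq> quotV V E" by simp
    fix f assume "automorphism (quotV V E) (quotE V E) f"
    then have "bij_betw f {V} {V}" unfolding automorphism_def Q by (elim conjE)
    then have "f V = V" using bij_betwE by fastforce
    then show "\<forall>x\<in>quotV V E. f x = x" unfolding Q by simp
  qed
  moreover have "finite (quotV V E)" unfolding Q by simp
  ultimately have "det_num (quotV V E) (quotE V E) \<le> 0" using det_num_le by fastforce
  then show "det_num (quotV V E) (quotE V E) = 0" by simp
qed

theorem mainTheorem8:
  shows "(\<forall>(V :: 'a set) E T t.
            sgraph V E \<and> (\<exists>v. isolated V E v) \<and> has_distinct_twins V E \<and>
            min_twin_cover V E T \<and> t \<ge> 1 \<longrightarrow>
              (t + 1) * card T + t - 1 \<le> det_num (mycV t V) (mycE t V E) \<and>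
              det_num (mycV t V) (mycE t V E)
                \<le> det_num (quotV V E) (quotE V E) + (t + 1) * card T + t - 1)
       \<and> (\<forall>t::nat. t \<ge> 1 \<longrightarrow>
            (\<exists>(V :: nat set) E T.
               sgraph V E \<and> (\<exists>v. isolated V E v) \<and> has_distinct_twins V E \<and>
               min_twin_cover V E T \<and>
               det_num (mycV t V) (mycE t V E) = (t + 1) * card T + t - 1)
          \<and> (\<exists>(V :: nat set) E T.
               sgraph V E \<and> (\<exists>v. isolated V E v) \<and> has_distinct_twins V E \<and>
               min_twin_cover V E T \<and>
               det_num (mycV t V) (mycE t V E)
                 = det_num (quotV V E) (quotE V E) + (t + 1) * card T + t - 1))"
  apply (rule conjI)
   apply (rule general_part)
  apply (intro allI impI)
  subgoal premises prems for t
  proof -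
    have t1: "t \<ge> 1" using prems .
    let ?V = "{0,1} :: nat set" and ?E = "{} :: nat set set"
    note ex = example_props[of ?V ?E, OF refl refl]
    have hyp: "sgraph ?V ?E \<and> (\<exists>v. isolated ?V ?E v) \<and> has_distinct_twins ?V ?E \<and> min_twin_cover ?V ?E {0}"
      using ex by blast
    have b: "(t + 1) * card {0::nat} + t - 1 \<le> det_num (mycV t ?V) (mycE t ?V ?E) \<and>
             det_num (mycV t ?V) (mycE t ?V ?E) \<le> det_num (quotV ?V ?E) (quotE ?V ?E) + (t + 1) * card {0::nat} + t - 1"
      using general_part[where 'a=nat, rule_format, of ?V ?E "{0}" t] hyp t1 by blast
    then have eq: "det_num (mycV t ?V) (mycE t ?V ?E) = (t + 1) * card {0::nat} + t - 1"
      using ex(5) by simp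
    show ?thesis
      using hyp eq ex(5) by (intro conjI exI[of _ ?V] exI[of _ ?E] exI[of _ "{0}"]) simp_all
  qed
  done


end
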